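(* Let $q\in\mathbb{C}$, $|q|<1$. For each $\mathfrak{t}\in\{\widetilde{\mathrm{I}},\mathrm{II},\mathrm{III},\widetilde{\mathrm{IV}}\}$ and all $u,v\in\mathfrak{A}^0_{\mathfrak{t}}$, $$\mathfrak{z}_q[u*_{\mathfrak{t}}v]=\mathfrak{z}_q[u]\,\mathfrak{z}_q[v].$$
   Context: For integer tuples $\mathbf{t},\mathbf{s}$ of length $d$ put $\mathfrak{z}_q^{\mathbf{t}}[\mathbf{s}]=\sum_{k_1>\dots>k_d>0}\prod_{j=1}^d\frac{q^{k_jt_j}}{(1-q^{k_j})^{s_j}}$. All algebras are over $\mathbb{Q}$; $\mathbf{1}$ is the empty word. For a free algebra on a set of letters with a commutative bilinear product $[\cdot,\cdot]$ on the span of letters, the associated stuffle $*$ is the bilinear product with $\mathbf{1}*u=u*\mathbf{1}=u$ and $(\alpha u)*(\beta v)=\alpha(u*\beta v)+\beta(\alpha u*v)+[\alpha,\beta](u*v)$ ($\alpha,\beta$ letters, $u,v$ words). Type $\widetilde{\mathrm{I}}$: $\mathfrak{A}^1_{\widetilde{\mathrm{I}}}$ = free algebra on $\theta$, $z_k$ ($k\ge1$), $[z_k,z_l]=z_{k+l}+z_{k+l-1}$, $[\theta,z_k]=[z_k,\theta]=z_{k+1}$, $[\theta,\theta]=z_2-\theta$. $\mathfrak{A}^0_{\widetilde{\mathrm{I}}}=\mathbb{Q}\mathbf{1}+\theta\mathfrak{A}^1_{\widetilde{\mathrm{I}}}+\sum_{k\ge2}z_k\mathfrak{A}^1_{\widetilde{\mathrm{I}}}$.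 $\mathfrak{z}_q$ is $\mathbb{Q}$-linear with $\mathfrak{z}_q[\mathbf{1}]=1$ and $\mathfrak{z}_q[y_1\cdots y_d]=\sum_{k_1>\dots>k_d>0}\prod_jM_{k_j}(y_j)$, $M_k(\theta)=\frac{q^k}{1-q^k}$, $M_k(z_s)=\frac{q^{(s-1)k}}{(1-q^k)^s}$. Type II: $\mathfrak{A}^1_{\mathrm{II}}$ = free algebra on $z'_k$ ($k\ge0$), $[z'_k,z'_l]=z'_{k+l}$; $\mathfrak{A}^0_{\mathrm{II}}=\mathbb{Q}\mathbf{1}+\sum_{k\ge1}z'_k\mathfrak{A}^1_{\mathrm{II}}$; $\mathfrak{z}_q[\mathbf{1}]=1$, $\mathfrak{z}_q[z'_{s_1}\cdots z'_{s_d}]=\mathfrak{z}_q^{(s_1,\dots,s_d)}[s_1,\dots,s_d]$. Type III: $B$ = free algebra on $z_k$ ($k\in\mathbb{Z}$) with stuffle $*_B$ from $[z_k,z_l]=z_{k+l}$. $\mathfrak{A}^0_{\mathrm{III}}$ = $\mathbb{Q}$-span of symbols $z'_kw$ ($k\in\mathbb{Z}$, $w$ a word of $B$). $\sigma_-(z'_nw):=z_nw-z_{n-1}w$. $z'_ku*_{\mathrm{III}}z'_lv:=z'_k(u*_B\sigma_-(z'_lv))+z'_l(\sigma_-(z'_ku)*_Bv)+(z'_{k+l}-z'_{k+l-1})(u*_Bv)$, extended bilinearly. $\mathfrak{z}_q[z'_{s_1}z_{s_2}\cdots z_{s_d}]=\mathfrak{z}_q^{(1,0,\dots,0)}[s_1,\dots,s_d]$,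 extended linearly. Type $\widetilde{\mathrm{IV}}$: $C$ = free algebra on $z'_k$ ($k\ge0$) with stuffle $*_C$ from $[z'_k,z'_l]=z'_{k+l}$. $\mathfrak{A}^1_{\widetilde{\mathrm{IV}}}=\mathbb{Q}\mathbf{1}\oplus\theta C\oplus\bigoplus_{k\ge1}z_kC$, $\mathfrak{A}^0_{\widetilde{\mathrm{IV}}}=\mathbb{Q}\mathbf{1}\oplus\theta C\oplus\bigoplus_{k\ge2}z_kC$. $\sigma_+(z_nw):=z'_nw+z'_{n-1}w$. $*_{\widetilde{\mathrm{IV}}}$ is bilinear with unit $\mathbf{1}$ and for $k,l\ge1$, words $u,v\in C$: $z_ku*z_lv=z_k(u*_C\sigma_+(z_lv))+z_l(\sigma_+(z_ku)*_Cv)+(z_{k+l}+z_{k+l-1})(u*_Cv)$; $z_ku*\theta v=\theta v*z_ku=z_k(u*_Cz'_1v)+\theta(\sigma_+(z_ku)*_Cv)+z_{k+1}(u*_Cv)$; $\theta u*\theta v=\theta(u*_Cz'_1v)+\theta(z'_1u*_Cv)+(z_2-\theta)(u*_Cv)$. $\mathfrak{z}_q[\mathbf{1}]=1$, $\mathfrak{z}_q[\theta z'_{s_2}\cdots z'_{s_d}]=\mathfrak{z}_q^{(1,s_2,\dots,s_d)}[1,s_2,\dots,s_d]$, $\mathfrak{z}_q[z_{s_1}z'_{s_2}\cdots z'_{s_d}]=\mathfrak{z}_q^{(s_1-1,s_2,\dots,s_d)}[s_1,\dots,s_d]$, extended linearly. *)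

theory Defs
  imports "HOL-Analysis.Analysis"
begin

text \<open>An element of a free Q-algebra (or of a Q-span of symbols) is represented as a finite
  formal linear combination: a list of (coefficient, basis element) pairs.\<close>

type_synonym 'w lc = "(rat \<times> 'w) list"

definition lc_map :: "('w \<Rightarrow> 'v) \<Rightarrow> 'w lc \<Rightarrow> 'v lc" where
  "lc_map f xs = map (\<lambda>(c, w). (c, f w)) xs"

definition lc_bilin :: "('w \<Rightarrow> 'v \<Rightarrow> 'u lc) \<Rightarrow> 'w lc \<Rightarrow> 'v lc \<Rightarrow> 'u lc" where
  "lc_bilin P xs ys =
     concat (map (\<lambda>(a, x). concat (map (\<lambda>(b, y). map (\<lambda>(c, w). (a * b * c, w)) (P x y)) ys)) xs)"

definition lc_eval :: "('w \<Rightarrow> complex) \<Rightarrow> 'w lc \<Rightarrow> complex" where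
  "lc_eval f xs = (\<Sum>(c, w)\<leftarrow>xs. of_real (of_rat c) * f w)"

fun stuffle :: "('a \<Rightarrow> 'a \<Rightarrow> 'a lc) \<Rightarrow> 'a list \<Rightarrow> 'a list \<Rightarrow> 'a list lc" where
  "stuffle br [] v = [(1, v)]"
| "stuffle br (a # u) [] = [(1, a # u)]"
| "stuffle br (a # u) (b # v) =
     lc_map (\<lambda>w. a # w) (stuffle br u (b # v))
   @ lc_map (\<lambda>w. b # w) (stuffle br (a # u) v)
   @ concat (map (\<lambda>(c, l). map (\<lambda>(c', w). (c * c', l # w)) (stuffle br u v)) (br a b))"

definition dec_tuples :: "nat \<Rightarrow> nat list set" where
  "dec_tuples d = {ks. length ks = d \<and> sorted_wrt (>) ks \<and> (\<forall>k\<in>set ks. 0 < k)}"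

text \<open>\<open>\<zeta>_q^t[s] = \<Sum>_{k\<^sub>1>\<dots>>k\<^sub>d>0} \<Prod>_j q^{k_j t_j} / (1 - q^{k_j})^{s_j}\<close>
  for integer tuples t, s of length d (sum taken as an unordered/absolute sum).\<close>
definition zq_ts :: "complex \<Rightarrow> int list \<Rightarrow> int list \<Rightarrow> complex" where
  "zq_ts q t s = infsum (\<lambda>ks. \<Prod>j<length s.
       q powi (int (ks ! j) * t ! j) / (1 - q ^ (ks ! j)) powi (s ! j)) (dec_tuples (length s))"

datatype letterI = Theta | Z nat

fun validI :: "letterI \<Rightarrow> bool" where
  "validI Theta = True"
| "validI (Z k) = (1 \<le> k)"

fun bracketI :: "letterI \<Rightarrow> letterI \<Rightarrow> letterI lc" where
  "bracketI (Z k) (Z l) = [(1, Z (k + l)), (1, Z (k + l - 1))]"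
| "bracketI Theta (Z k) = [(1, Z (k + 1))]"
| "bracketI (Z k) Theta = [(1, Z (k + 1))]"
| "bracketI Theta Theta = [(1, Z 2), (-1, Theta)]"

definition stuffleI :: "letterI list \<Rightarrow> letterI list \<Rightarrow> letterI list lc" where
  "stuffleI = stuffle bracketI"

text \<open>Words spanning \<open>\<AA>\<^sup>0\<close>: the empty word, or words over the alphabet whose first letter is not \<open>z\<^sub>1\<close>.\<close>
definition admI :: "letterI list \<Rightarrow> bool" where
  "admI w = ((\<forall>y\<in>set w. validI y) \<and> (w = [] \<or> hd w \<noteq> Z 1))"

fun MI :: "complex \<Rightarrow> nat \<Rightarrow> letterI \<Rightarrow> complex" where
  "MI q k Theta = q ^ k / (1 - q ^ k)"
| "MI q k (Z s) = q ^ ((s - 1) * k) / (1 - q ^ k) ^ s"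

definition zqI :: "complex \<Rightarrow> letterI list \<Rightarrow> complex" where
  "zqI q w = infsum (\<lambda>ks. \<Prod>j<length w. MI q (ks ! j) (w ! j)) (dec_tuples (length w))"

text \<open>Letters \<open>z'\<^sub>k\<close> (k \<ge> 0) are represented by \<open>k :: nat\<close>.\<close>
definition bracketII :: "nat \<Rightarrow> nat \<Rightarrow> nat lc" where
  "bracketII k l = [(1, k + l)]"

definition stuffleII :: "nat list \<Rightarrow> nat list \<Rightarrow> nat list lc" where
  "stuffleII = stuffle bracketII"

definition admII :: "nat list \<Rightarrow> bool" where
  "admII w = (w = [] \<or> 1 \<le> hd w)"

definition zqII :: "complex \<Rightarrow> nat list \<Rightarrow> complex" where
  "zqII q w = zq_ts q (map int w) (map int w)"

text \<open>B: free algebra on \<open>z\<^sub>k\<close> (k \<in> \<int>), letters represented by \<open>k :: int\<close>.\<close>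
definition bracketB :: "int \<Rightarrow> int \<Rightarrow> int lc" where
  "bracketB k l = [(1, k + l)]"

definition stuffleB :: "int list \<Rightarrow> int list \<Rightarrow> int list lc" where
  "stuffleB = stuffle bracketB"

text \<open>The symbol \<open>z'\<^sub>k w\<close> of \<open>\<AA>\<^sup>0_III\<close> is represented by the pair \<open>(k, w)\<close>.\<close>
definition sigma_minus :: "int \<times> int list \<Rightarrow> int list lc" where
  "sigma_minus x = (case x of (n, w) \<Rightarrow> [(1, n # w), (-1, (n - 1) # w)])"

fun stuffleIII :: "int \<times> int list \<Rightarrow> int \<times> int list \<Rightarrow> (int \<times> int list) lc" where
  "stuffleIII (k, u) (l, v) =
     lc_map (\<lambda>w. (k, w)) (lc_bilin stuffleB [(1, u)] (sigma_minus (l, v)))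
   @ lc_map (\<lambda>w. (l, w)) (lc_bilin stuffleB (sigma_minus (k, u)) [(1, v)])
   @ lc_map (\<lambda>w. (k + l, w)) (stuffleB u v)
   @ map (\<lambda>(c, w). (- c, (k + l - 1, w))) (stuffleB u v)"

definition zqIII :: "complex \<Rightarrow> int \<times> int list \<Rightarrow> complex" where
  "zqIII q x = (case x of (s1, w) \<Rightarrow> zq_ts q (1 # replicate (length w) 0) (s1 # w))"

text \<open>C: free algebra on \<open>z'\<^sub>k\<close> (k \<ge> 0), letters represented by \<open>k :: nat\<close>, with stuffle
  \<open>*\<^sub>C\<close> = \<open>stuffleII\<close>. Basis of \<open>\<AA>\<^sup>1_IV\<close>: \<open>\<one>\<close>, \<open>\<theta> u\<close>, \<open>z\<^sub>k u\<close> (k \<ge> 1, u a word of C).\<close>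

datatype wordIV = One | ThW "nat list" | ZW nat "nat list"

definition stuffleC :: "nat list \<Rightarrow> nat list \<Rightarrow> nat list lc" where
  "stuffleC = stuffle bracketII"

definition sigma_plus :: "nat \<Rightarrow> nat list \<Rightarrow> nat list lc" where
  "sigma_plus n w = [(1, n # w), (1, (n - 1) # w)]"

fun stuffleIV :: "wordIV \<Rightarrow> wordIV \<Rightarrow> wordIV lc" where
  "stuffleIV One x = [(1, x)]"
| "stuffleIV (ThW u) One = [(1, ThW u)]"
| "stuffleIV (ZW k u) One = [(1, ZW k u)]"
| "stuffleIV (ZW k u) (ZW l v) =
     lc_map (ZW k) (lc_bilin stuffleC [(1, u)] (sigma_plus l v))
   @ lc_map (ZW l) (lc_bilin stuffleC (sigma_plus k u) [(1, v)])
   @ lc_map (ZW (k + l)) (stuffleC u v)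
   @ lc_map (ZW (k + l - 1)) (stuffleC u v)"
| "stuffleIV (ZW k u) (ThW v) =
     lc_map (ZW k) (stuffleC u (1 # v))
   @ lc_map ThW (lc_bilin stuffleC (sigma_plus k u) [(1, v)])
   @ lc_map (ZW (k + 1)) (stuffleC u v)"
| "stuffleIV (ThW v) (ZW k u) =
     lc_map (ZW k) (stuffleC u (1 # v))
   @ lc_map ThW (lc_bilin stuffleC (sigma_plus k u) [(1, v)])
   @ lc_map (ZW (k + 1)) (stuffleC u v)"
| "stuffleIV (ThW u) (ThW v) =
     lc_map ThW (stuffleC u (1 # v))
   @ lc_map ThW (stuffleC (1 # u) v)
   @ lc_map (ZW 2) (stuffleC u v)
   @ map (\<lambda>(c, w). (- c, ThW w)) (stuffleC u v)"

text \<open>Basis of \<open>\<AA>\<^sup>0_IV\<close>: \<open>\<one>\<close>, \<open>\<theta> u\<close>, \<open>z\<^sub>k u\<close> with k \<ge> 2.\<close>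
fun admIV :: "wordIV \<Rightarrow> bool" where
  "admIV One = True"
| "admIV (ThW u) = True"
| "admIV (ZW k u) = (2 \<le> k)"

fun zqIV :: "complex \<Rightarrow> wordIV \<Rightarrow> complex" where
  "zqIV q One = 1"
| "zqIV q (ThW u) = zq_ts q (1 # map int u) (1 # map int u)"
| "zqIV q (ZW s1 u) = zq_ts q ((int s1 - 1) # map int u) (int s1 # map int u)"

end

theory Submission imports Defs begin

definition cc :: "rat \<Rightarrow> complex" where "cc c = of_real (of_rat c)"

lemma cc_simps[simp]: "cc 1 = 1" "cc (a * b) = cc a * cc b" "cc (- a) = - cc a"
  by (simp_all add: cc_def of_rat_mult of_rat_minus)

fun T :: "nat \<Rightarrow> (nat \<Rightarrow> 'b::comm_semiring_1) list \<Rightarrow> 'b" where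
  "T N [] = 1"
| "T N (g # gs) = (\<Sum>n\<in>{1..<N}. g n * T n gs)"

lemma split_prod_sum:
  fixes x y :: "nat \<Rightarrow> 'b::comm_ring_1"
  shows "(\<Sum>n\<in>{1..<N}. x n) * (\<Sum>m\<in>{1..<N}. y m) =
     (\<Sum>n\<in>{1..<N}. x n * (\<Sum>m\<in>{1..<n}. y m)) + (\<Sum>m\<in>{1..<N}. y m * (\<Sum>n\<in>{1..<m}. x n))
     + (\<Sum>n\<in>{1..<N}. x n * y n)"
proof (induction N)
  case 0 then show ?case by simp
next
  case (Suc N)
  show ?case
  proof (cases "N = 0")
    case True then show ?thesis by simp
  next
    case False
    then have e: "{1..<Suc N} = insert N {1..<N}" by auto
    show ?thesis using Suc.IH unfolding e by (simp add: algebra_simps sum_distrib_left sum_distrib_right)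
  qed
qed

lemma lc_eval_Nil[simp]: "lc_eval f [] = 0" by (simp add: lc_eval_def)
lemma lc_eval_Cons[simp]: "lc_eval f ((c,w)#xs) = cc c * f w + lc_eval f xs"
  by (simp add: lc_eval_def cc_def)
lemma lc_eval_append[simp]: "lc_eval f (xs @ ys) = lc_eval f xs + lc_eval f ys"
  by (simp add: lc_eval_def)
lemma lc_eval_concat: "lc_eval f (concat xss) = (\<Sum>xs\<leftarrow>xss. lc_eval f xs)"
  by (induction xss) auto
lemma lc_eval_lc_map[simp]: "lc_eval f (lc_map g xs) = lc_eval (\<lambda>w. f (g w)) xs"
  by (induction xs) (auto simp: lc_map_def)
lemma lc_eval_neg[simp]: "lc_eval f (map (\<lambda>(c, w). (- c, g w)) xs) = - lc_eval (\<lambda>w. f (g w)) xs"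
  by (induction xs) auto
lemma lc_eval_scale: "lc_eval f (map (\<lambda>(c, w). (a * c, g w)) xs) = cc a * lc_eval (\<lambda>w. f (g w)) xs"
  by (induction xs) (auto simp: algebra_simps)
lemma lc_eval_sum: "finite A \<Longrightarrow> lc_eval (\<lambda>w. \<Sum>n\<in>A. h n w) xs = (\<Sum>n\<in>A. lc_eval (h n) xs)"
  by (induction xs) (auto simp: sum.distrib sum_distrib_left)
lemma lc_eval_cmult: "lc_eval (\<lambda>w. k * h w) xs = k * lc_eval h xs"
  by (induction xs) (auto simp: algebra_simps)
lemma lc_eval_cong: "(\<And>w. w \<in> snd ` set xs \<Longrightarrow> f w = g w) \<Longrightarrow> lc_eval f xs = lc_eval g xs"
  by (induction xs) auto

lemma lc_eval_bilin:
  assumes "\<And>x y. x \<in> snd ` set xs \<Longrightarrow> y \<in> snd ` set ys \<Longrightarrow> lc_eval f (P x y) = g x * h y"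
  shows "lc_eval f (lc_bilin P xs ys) = lc_eval g xs * lc_eval h ys"
  using assms
proof (induction xs)
  case Nil then show ?case by (simp add: lc_bilin_def)
next
  case (Cons p xs)
  obtain a x where p: "p = (a, x)" by force
  have "lc_eval f (concat (map (\<lambda>(b, y). map (\<lambda>(c, w). (a * b * c, w)) (P x y)) ys)) = cc a * g x * lc_eval h ys"
    using Cons.prems[of x] p
  proof (induction ys)
    case Nil then show ?case by simp
  next
    case (Cons r ys)
    obtain b y where r: "r = (b, y)" by force
    have "lc_eval f (map (\<lambda>(c, w). (a * b * c, w)) (P x y)) = cc a * cc b * (g x * h y)"
      using lc_eval_scale[of f "a*b" "\<lambda>w. w" "P x y"] Cons.prems r by simp
    then show ?case using Cons r by (simp add: algebra_simps)
  qed
  then show ?case using Cons p by (simp add: lc_bilin_def algebra_simps)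
qed

lemma lc_eval_sum_list: "lc_eval f (concat (map h xs)) = (\<Sum>x\<leftarrow>xs. lc_eval f (h x))"
  by (simp add: lc_eval_concat o_def)

lemma sum_list_sum_swap: "finite A \<Longrightarrow> (\<Sum>x\<leftarrow>xs. \<Sum>n\<in>A. g x n) = (\<Sum>n\<in>A. \<Sum>x\<leftarrow>xs. g x n)"
  by (induction xs) (auto simp: sum.distrib)

lemma sum_list_mult_right: "(\<Sum>x\<leftarrow>xs. g x) * (k::complex) = (\<Sum>x\<leftarrow>xs. g x * k)"
  by (induction xs) (auto simp: algebra_simps)

lemma swap_pair: "finite A \<Longrightarrow> (\<Sum>(c,l)\<leftarrow>xs. k c * (\<Sum>n\<in>A. f l n * h n))
   = (\<Sum>n\<in>A. (\<Sum>(c,l)\<leftarrow>xs. k c * f l n) * (h n::complex))"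
  by (induction xs) (auto simp: sum.distrib sum_distrib_left sum_distrib_right algebra_simps)

lemma T_Cons_map: "T N (map val (a # w)) = (\<Sum>n\<in>{1..<N}. val a n * T n (map val w))"
  by simp

lemma stuffle_T:
  fixes val :: "'a \<Rightarrow> nat \<Rightarrow> complex"
  assumes br: "\<And>a b n. a \<in> A \<Longrightarrow> b \<in> A \<Longrightarrow> n \<ge> 1 \<Longrightarrow> lc_eval (\<lambda>l. val l n) (br a b) = val a n * val b n"
    and "set u \<subseteq> A" "set v \<subseteq> A"
  shows "lc_eval (\<lambda>w. T N (map val w)) (stuffle br u v) = T N (map val u) * T N (map val v)"
  using assms
proof (induction br u v arbitrary: N rule: stuffle.induct)
  case (1 br v) then show ?case by simp
next
  case (2 br a u) then show ?case by simp
next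
  case (3 br a u b v)
  let ?F = "\<lambda>n w. T n (map val w)"
  have A: "lc_eval (?F N) (lc_map ((#) a) (stuffle br u (b # v)))
     = (\<Sum>n\<in>{1..<N}. val a n * (?F n u * ?F n (b # v)))"
    using 3(1)[OF 3(4)] 3(5,6) by (simp add: lc_eval_sum lc_eval_cmult)
  have B: "lc_eval (?F N) (lc_map ((#) b) (stuffle br (a # u) v))
     = (\<Sum>n\<in>{1..<N}. val b n * (?F n (a # u) * ?F n v))"
    using 3(2)[OF 3(4)] 3(5,6) by (simp add: lc_eval_sum lc_eval_cmult)
  have IH3: "\<And>N p. p \<in> set (br a b) \<Longrightarrow> lc_eval (?F N) (stuffle br u v) = ?F N u * ?F N v"
    using 3(3)[OF _ _ 3(4)] 3(5,6) by (metis prod.collapse insert_subset list.simps(15))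
  have C: "lc_eval (?F N) (concat (map (\<lambda>(c, l). map (\<lambda>(c', w). (c * c', l # w)) (stuffle br u v)) (br a b)))
     = (\<Sum>n\<in>{1..<N}. val a n * val b n * (?F n u * ?F n v))"
  proof -
    have "lc_eval (?F N) (concat (map (\<lambda>(c, l). map (\<lambda>(c', w). (c * c', l # w)) (stuffle br u v)) (br a b)))
       = (\<Sum>(c,l)\<leftarrow>br a b. cc c * (\<Sum>n\<in>{1..<N}. val l n * (?F n u * ?F n v)))"
      unfolding lc_eval_sum_list
      by (rule arg_cong[where f=sum_list], rule map_cong, simp,
          auto simp: lc_eval_scale lc_eval_sum lc_eval_cmult IH3)
    also have "\<dots> = (\<Sum>n\<in>{1..<N}. (\<Sum>(c,l)\<leftarrow>br a b. cc c * val l n) * (?F n u * ?F n v))"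
      by (rule swap_pair) simp
    also have "\<dots> = (\<Sum>n\<in>{1..<N}. val a n * val b n * (?F n u * ?F n v))"
    proof (rule sum.cong)
      fix n assume "n \<in> {1..<N}"
      then have "lc_eval (\<lambda>l. val l n) (br a b) = val a n * val b n" using 3(4)[of a b n] 3(5,6) by auto
      moreover have "lc_eval (\<lambda>l. val l n) (br a b) = (\<Sum>(c,l)\<leftarrow>br a b. cc c * val l n)"
        by (simp add: lc_eval_def cc_def)
      ultimately show "(\<Sum>(c,l)\<leftarrow>br a b. cc c * val l n) * (?F n u * ?F n v) = val a n * val b n * (?F n u * ?F n v)"
        by simp
    qed simp
    finally show ?thesis .
  qed
  have "?F N (a # u) * ?F N (b # v) = (\<Sum>n\<in>{1..<N}. val a n * ?F n u * (\<Sum>m\<in>{1..<n}. val b m * ?F m v))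
     + (\<Sum>m\<in>{1..<N}. val b m * ?F m v * (\<Sum>n\<in>{1..<m}. val a n * ?F n u))
     + (\<Sum>n\<in>{1..<N}. val a n * ?F n u * (val b n * ?F n v))"
    by (simp only: T_Cons_map split_prod_sum)
  also have "\<dots> = lc_eval (?F N) (stuffle br (a # u) (b # v))"
    by (simp only: stuffle.simps lc_eval_append A B C) (simp add: algebra_simps)
  finally show ?case by simp
qed

section \<open>Truncated sums vs infinite sums\<close>

definition PP :: "(nat \<Rightarrow> 'b::comm_semiring_1) list \<Rightarrow> nat list \<Rightarrow> 'b" where
  "PP ws ks = (\<Prod>j<length ws. (ws ! j) (ks ! j))"

definition SS :: "nat \<Rightarrow> nat \<Rightarrow> nat list set" where
  "SS N d = {ks \<in> dec_tuples d. \<forall>k\<in>set ks. k < N}"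

definition ZZ :: "(nat \<Rightarrow> complex) list \<Rightarrow> complex" where
  "ZZ ws = infsum (PP ws) (dec_tuples (length ws))"

lemma dec_tuples_0: "dec_tuples 0 = {[]}"
  by (auto simp: dec_tuples_def)

lemma SS_0: "SS N 0 = {[]}"
  by (auto simp: SS_def dec_tuples_def)

lemma SS_Suc: "SS N (Suc d) = (\<lambda>(n, ks). n # ks) ` (SIGMA n:{1..<N}. SS n d)"
proof (intro set_eqI iffI)
  fix x assume "x \<in> SS N (Suc d)"
  then obtain n ks where x: "x = n # ks" and "length ks = d" "sorted_wrt (>) (n # ks)"
     "\<forall>k\<in>set (n # ks). 0 < k \<and> k < N"
    by (cases x) (auto simp: SS_def dec_tuples_def)
  then have "(n, ks) \<in> (SIGMA n:{1..<N}. SS n d)"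
    by (auto simp: SS_def dec_tuples_def)
  then show "x \<in> (\<lambda>(n, ks). n # ks) ` (SIGMA n:{1..<N}. SS n d)" using x by force
next
  fix x assume "x \<in> (\<lambda>(n, ks). n # ks) ` (SIGMA n:{1..<N}. SS n d)"
  then obtain n ks where x: "x = n # ks" and "n \<in> {1..<N}" "ks \<in> SS n d" by auto
  then show "x \<in> SS N (Suc d)"
    by (auto simp: SS_def dec_tuples_def)
qed

lemma finite_SS: "finite (SS N d)"
  by (induction d arbitrary: N) (auto simp: SS_0 SS_Suc)

lemma PP_Nil[simp]: "PP [] ks = 1" by (simp add: PP_def)
lemma PP_Cons[simp]: "PP (g # ws) (n # ks) = g n * PP ws ks"
  by (simp add: PP_def prod.lessThan_Suc_shift del: prod.lessThan_Suc)

lemma T_eq_sum: "T N ws = sum (PP ws) (SS N (length ws))"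
proof (induction ws arbitrary: N)
  case Nil then show ?case by (simp add: SS_0)
next
  case (Cons g ws)
  have inj: "inj_on (\<lambda>(n, ks). n # ks) (SIGMA n:{1..<N}. SS n (length ws))"
    by (auto simp: inj_on_def)
  have "sum (PP (g # ws)) (SS N (length (g # ws)))
      = sum (\<lambda>(n, ks). g n * PP ws ks) (SIGMA n:{1..<N}. SS n (length ws))"
    by (simp only: length_Cons SS_Suc sum.reindex[OF inj]) (simp add: case_prod_beta)
  also have "\<dots> = (\<Sum>n\<in>{1..<N}. \<Sum>ks\<in>SS n (length ws). g n * PP ws ks)"
    by (rule sum.Sigma[symmetric]) (auto simp: finite_SS)
  also have "\<dots> = T N (g # ws)"
    by (simp add: Cons sum_distrib_left)
  finally show ?case by simp
qed

lemma SS_eventually: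
  assumes "finite X" "X \<subseteq> dec_tuples d"
  shows "eventually (\<lambda>N. finite (SS N d) \<and> X \<subseteq> SS N d \<and> SS N d \<subseteq> dec_tuples d) sequentially"
proof -
  define M where "M = Max (insert 0 (\<Union>(set ` X)))"
  have fin: "finite (insert 0 (\<Union>(set ` X)))" using assms by auto
  have sub: "X \<subseteq> SS N d" if "N > M" for N
  proof
    fix ks assume ks: "ks \<in> X"
    have "\<forall>k\<in>set ks. k \<le> M" using Max_ge[OF fin] ks unfolding M_def by blast
    then show "ks \<in> SS N d" using ks assms that by (auto simp: SS_def)
  qed
  have "finite (SS N d) \<and> X \<subseteq> SS N d \<and> SS N d \<subseteq> dec_tuples d" if "N \<ge> Suc M" for N
  proof -
    have "SS N d \<subseteq> dec_tuples d" by (auto simp: SS_def)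
    then show ?thesis using sub[of N] that finite_SS[of N d] by simp
  qed
  then show ?thesis unfolding eventually_sequentially by blast
qed

lemma T_tendsto:
  assumes "PP ws summable_on dec_tuples (length ws)"
  shows "(\<lambda>N. T N ws) \<longlonglongrightarrow> ZZ ws"
proof -
  have hs: "(sum (PP ws) \<longlongrightarrow> ZZ ws) (finite_subsets_at_top (dec_tuples (length ws)))"
    using assms unfolding ZZ_def by (simp add: has_sum_def[symmetric] has_sum_infsum)
  have fl: "filterlim (\<lambda>N. SS N (length ws)) (finite_subsets_at_top (dec_tuples (length ws))) sequentially"
    unfolding filterlim_finite_subsets_at_top using SS_eventually by blast
  show ?thesis
    unfolding T_eq_sum using tendsto_compose_filtermap[of "sum (PP ws)"] hs fl
    by (metis filterlim_compose)
qed

section \<open>Summability\<close>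

lemma summable_pow_geom_aux: "\<bar>x::real\<bar> < 1 \<Longrightarrow> summable (\<lambda>n. real n ^ d * x ^ n)"
proof (induction d arbitrary: x)
  case 0 then show ?case by (simp add: summable_geometric)
next
  case (Suc d)
  have "\<bar>\<bar>x\<bar>\<bar> < 1" using Suc by simp
  have s: "summable (\<lambda>n. diffs (\<lambda>n. real n ^ d) n * \<bar>x\<bar> ^ n)"
    by (rule termdiff_converges[of "\<bar>x\<bar>" 1]) (use Suc in auto)
  show ?case
  proof (rule summable_comparison_test'[OF s])
    fix n :: nat
    have "real n ^ Suc d \<le> real (Suc n) ^ Suc d" by (rule power_mono) auto
    then have "real n ^ Suc d * \<bar>x\<bar> ^ n \<le> real (Suc n) ^ Suc d * \<bar>x\<bar> ^ n"
      by (rule mult_right_mono) simp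
    then show "norm (real n ^ Suc d * x ^ n) \<le> diffs (\<lambda>n. real n ^ d) n * \<bar>x\<bar> ^ n"
      by (simp add: diffs_def abs_mult power_abs)
  qed
qed

lemma T_nonneg: "(\<And>h n. h \<in> set ws \<Longrightarrow> 0 \<le> (h n::real)) \<Longrightarrow> 0 \<le> T N ws"
  by (induction ws arbitrary: N) (auto intro!: sum_nonneg)

lemma T_poly_bound:
  assumes "\<And>h n. h \<in> set ws \<Longrightarrow> 0 \<le> (h n::real)" "\<And>h n. h \<in> set ws \<Longrightarrow> n \<ge> 1 \<Longrightarrow> h n \<le> B"
  shows "T N ws \<le> (B * real N) ^ length ws"
  using assms
proof (induction ws arbitrary: N)
  case Nil then show ?case by simp
next
  case (Cons h ws)
  have B0: "0 \<le> B" using Cons.prems(1)[of h 1] Cons.prems(2)[of h 1] by auto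
  have "T N (h # ws) = (\<Sum>n\<in>{1..<N}. h n * T n ws)" by simp
  also have "\<dots> \<le> (\<Sum>n\<in>{1..<N}. B * (B * real N) ^ length ws)"
  proof (rule sum_mono)
    fix n assume n: "n \<in> {1..<N}"
    have "T n ws \<le> (B * real n) ^ length ws" using Cons by auto
    also have "\<dots> \<le> (B * real N) ^ length ws"
      using n B0 by (intro power_mono mult_left_mono) auto
    finally have "T n ws \<le> (B * real N) ^ length ws" .
    then show "h n * T n ws \<le> B * (B * real N) ^ length ws"
      using n Cons.prems T_nonneg[of ws n] B0 by (intro mult_mono) auto
  qed
  also have "\<dots> \<le> real N * (B * (B * real N) ^ length ws)"
    using B0 by (simp add: mult_right_mono)
  also have "\<dots> = (B * real N) ^ length (h # ws)" by (simp add: algebra_simps)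
  finally show ?case .
qed

definition good :: "(nat \<Rightarrow> complex) list \<Rightarrow> bool" where
  "good ws \<longleftrightarrow> ws = [] \<or> ((\<exists>C r. 0 \<le> r \<and> r < 1 \<and> (\<forall>n\<ge>1. norm (hd ws n) \<le> C * r ^ n))
     \<and> (\<exists>B. \<forall>h\<in>set (tl ws). \<forall>n\<ge>1. norm (h n) \<le> B))"

lemma good_summable:
  assumes "good ws"
  shows "PP ws summable_on dec_tuples (length ws)"
proof (cases ws)
  case Nil then show ?thesis by (simp add: dec_tuples_0)
next
  case (Cons g rest)
  obtain C r B where r: "0 \<le> r" "r < 1" and g: "\<And>n. n \<ge> 1 \<Longrightarrow> norm (g n) \<le> C * r ^ n"
    and B: "\<And>h n. h \<in> set rest \<Longrightarrow> n \<ge> 1 \<Longrightarrow> norm (h n) \<le> B"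
  proof -
    have "\<exists>C r. 0 \<le> r \<and> r < 1 \<and> (\<forall>n\<ge>1. norm (g n) \<le> C * r ^ n)"
      "\<exists>B. \<forall>h\<in>set rest. \<forall>n\<ge>1. norm (h n) \<le> B"
      using assms Cons unfolding good_def by auto
    then show ?thesis using that by blast
  qed
  define nws where "nws = map (\<lambda>h n. norm (h n)) ws"
  have nP: "norm (PP ws ks) = PP nws ks" for ks
    by (simp add: PP_def nws_def prod_norm[symmetric])
  define d where "d = length rest"
  define K where "K = \<bar>C\<bar> * \<bar>B\<bar> ^ d * suminf (\<lambda>n. real n ^ d * r ^ n)"
  have sm: "summable (\<lambda>n. real n ^ d * r ^ n)" using r by (intro summable_pow_geom_aux) auto
  have bnd: "T N nws \<le> K" for N
  proof -
    have "T N nws = (\<Sum>n\<in>{1..<N}. norm (g n) * T n (map (\<lambda>h n. norm (h n)) rest))"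
      by (simp add: nws_def Cons)
    also have "\<dots> \<le> (\<Sum>n\<in>{1..<N}. (\<bar>C\<bar> * r ^ n) * (\<bar>B\<bar> * real n) ^ d)"
    proof (rule sum_mono)
      fix n assume n: "n \<in> {1..<N}"
      have Tb: "T n (map (\<lambda>h n. norm (h n)) rest) \<le> (\<bar>B\<bar> * real n) ^ length (map (\<lambda>h n. norm (h n)) rest)"
      proof (rule T_poly_bound)
        fix h and m :: nat assume "h \<in> set (map (\<lambda>h n. norm (h n)) rest)" "1 \<le> m"
        then obtain h' where "h' \<in> set rest" "h = (\<lambda>n. norm (h' n))" by auto
        then show "h m \<le> \<bar>B\<bar>" using B[of h' m] \<open>1 \<le> m\<close> by simp
      qed auto
      have gb: "norm (g n) \<le> \<bar>C\<bar> * r ^ n"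
        using g[of n] n r abs_ge_self[of C] mult_right_mono[of C "\<bar>C\<bar>" "r ^ n"] by force
      show "norm (g n) * T n (map (\<lambda>h n. norm (h n)) rest) \<le> (\<bar>C\<bar> * r ^ n) * (\<bar>B\<bar> * real n) ^ d"
      proof -
        have "0 \<le> T n (map (\<lambda>h n. norm (h n)) rest)" by (rule T_nonneg) auto
        then show ?thesis using gb Tb r
          by (intro mult_mono) (auto simp: d_def)
      qed
    qed
    also have "\<dots> = \<bar>C\<bar> * \<bar>B\<bar> ^ d * (\<Sum>n\<in>{1..<N}. real n ^ d * r ^ n)"
      by (simp add: sum_distrib_left power_mult_distrib algebra_simps)
    also have "\<dots> \<le> K"
      unfolding K_def
      by (intro mult_left_mono sum_le_suminf[OF sm]) (use r in auto)
    finally show ?thesis .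
  qed
  have "(\<lambda>ks. norm (PP ws ks)) summable_on dec_tuples (length ws)"
  proof (rule nonneg_bdd_above_summable_on)
    show "bdd_above (sum (\<lambda>ks. norm (PP ws ks)) ` {F. F \<subseteq> dec_tuples (length ws) \<and> finite F})"
    proof (rule bdd_aboveI2)
      fix F assume F: "F \<in> {F. F \<subseteq> dec_tuples (length ws) \<and> finite F}"
      then obtain N where "F \<subseteq> SS N (length ws)"
        using SS_eventually[of F "length ws"] by (auto simp: eventually_sequentially)
      then have "sum (\<lambda>ks. norm (PP ws ks)) F \<le> sum (\<lambda>ks. norm (PP ws ks)) (SS N (length ws))"
        by (intro sum_mono2 finite_SS) auto
      also have "\<dots> = T N nws" by (simp add: T_eq_sum nP nws_def)
      also have "\<dots> \<le> K" by (rule bnd)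
      finally show "sum (\<lambda>ks. norm (PP ws ks)) F \<le> K" .
    qed
  qed simp
  then show ?thesis by (rule abs_summable_summable)
qed

lemma good_tendsto: "good ws \<Longrightarrow> (\<lambda>N. T N ws) \<longlonglongrightarrow> ZZ ws"
  using T_tendsto good_summable by blast

lemma lc_eval_tendsto:
  "(\<And>w. w \<in> snd ` set L \<Longrightarrow> (\<lambda>N. F N w) \<longlonglongrightarrow> G w) \<Longrightarrow> (\<lambda>N. lc_eval (F N) L) \<longlonglongrightarrow> lc_eval G L"
proof (induction L)
  case Nil then show ?case by simp
next
  case (Cons p L)
  obtain c w where p: "p = (c, w)" by force
  have "(\<lambda>N. F N w) \<longlonglongrightarrow> G w" using Cons.prems p by auto
  then have "(\<lambda>N. cc c * F N w + lc_eval (F N) L) \<longlonglongrightarrow> cc c * G w + lc_eval G L"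
    using Cons by (intro tendsto_add tendsto_mult_left) auto
  then show ?case using p by simp
qed

lemma lc_bilin_words:
  "w \<in> snd ` set (lc_bilin P xs ys) \<Longrightarrow> \<exists>x\<in>snd ` set xs. \<exists>y\<in>snd ` set ys. w \<in> snd ` set (P x y)"
  by (force simp: lc_bilin_def)

lemma assemble:
  assumes ident: "\<And>N x y. adm x \<Longrightarrow> adm y \<Longrightarrow> lc_eval (F N) (P x y) = F N x * F N y"
    and conv: "\<And>w. adm w \<Longrightarrow> (\<lambda>N. F N w) \<longlonglongrightarrow> G w"
    and clos: "\<And>x y w. adm x \<Longrightarrow> adm y \<Longrightarrow> w \<in> snd ` set (P x y) \<Longrightarrow> adm w"
    and u: "\<forall>(c, w)\<in>set u. adm w" and v: "\<forall>(c, w)\<in>set v. adm w"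
  shows "lc_eval G (lc_bilin P u v) = lc_eval G u * lc_eval G v"
proof -
  have u': "\<And>w. w \<in> snd ` set u \<Longrightarrow> adm w" using u by auto
  have v': "\<And>w. w \<in> snd ` set v \<Longrightarrow> adm w" using v by auto
  have tr: "lc_eval (F N) (lc_bilin P u v) = lc_eval (F N) u * lc_eval (F N) v" for N
    by (rule lc_eval_bilin) (auto intro: ident u' v')
  have c1: "(\<lambda>N. lc_eval (F N) (lc_bilin P u v)) \<longlonglongrightarrow> lc_eval G (lc_bilin P u v)"
  proof (rule lc_eval_tendsto)
    fix w assume "w \<in> snd ` set (lc_bilin P u v)"
    then obtain x y where "x \<in> snd ` set u" "y \<in> snd ` set v" "w \<in> snd ` set (P x y)"
      using lc_bilin_words by metis
    then show "(\<lambda>N. F N w) \<longlonglongrightarrow> G w" using conv clos u' v' by blast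
  qed
  have c2: "(\<lambda>N. lc_eval (F N) u * lc_eval (F N) v) \<longlonglongrightarrow> lc_eval G u * lc_eval G v"
    by (intro tendsto_mult lc_eval_tendsto conv u' v')
  show ?thesis using LIMSEQ_unique[OF c1] c2 tr by simp
qed

lemma lc_map_snd: "snd ` set (lc_map f L) = f ` (snd ` set L)"
  by (force simp: lc_map_def)

lemma br_part_snd:
  assumes "w \<in> snd ` set (concat (map (\<lambda>(c, l). map (\<lambda>(c', w). (c * c', l # w)) S) B))"
  shows "\<exists>l\<in>snd ` set B. \<exists>w'\<in>snd ` set S. w = l # w'"
proof -
  from assms obtain p where "p \<in> set (concat (map (\<lambda>(c, l). map (\<lambda>(c', w). (c * c', l # w)) S) B))" "w = snd p"
    by blast
  then obtain cl where "cl \<in> set B" "p \<in> set ((\<lambda>(c, l). map (\<lambda>(c', w). (c * c', l # w)) S) cl)"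
    unfolding set_concat set_map by blast
  moreover obtain c l where cl: "cl = (c, l)" by force
  ultimately have "(c, l) \<in> set B" "p \<in> set (map (\<lambda>(c', w). (c * c', l # w)) S)"
    by simp_all
  then obtain c' w' where "(c', w') \<in> set S" "p = (c * c', l # w')" by auto
  then show ?thesis using \<open>w = snd p\<close> \<open>(c, l) \<in> set B\<close> by force
qed

lemma stuffle_cases:
  assumes "w \<in> snd ` set (stuffle br (a # u) (b # v))"
  obtains (x1) w' where "w = a # w'" "w' \<in> snd ` set (stuffle br u (b # v))"
      | (x2) w' where "w = b # w'" "w' \<in> snd ` set (stuffle br (a # u) v)"
      | (x3) l w' where "w = l # w'" "l \<in> snd ` set (br a b)" "w' \<in> snd ` set (stuffle br u v)"
proof -
  have "w \<in> (#) a ` snd ` set (stuffle br u (b # v)) \<or> w \<in> (#) b ` snd ` set (stuffle br (a # u) v)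
     \<or> w \<in> snd ` set (concat (map (\<lambda>(c, l). map (\<lambda>(c', w). (c * c', l # w)) (stuffle br u v)) (br a b)))"
    using assms unfolding stuffle.simps set_append image_Un lc_map_snd by blast
  then show ?thesis
  proof (elim disjE)
    assume "w \<in> (#) a ` snd ` set (stuffle br u (b # v))"
    then show ?thesis using that(1) by blast
  next
    assume "w \<in> (#) b ` snd ` set (stuffle br (a # u) v)"
    then show ?thesis using that(2) by blast
  next
    assume "w \<in> snd ` set (concat (map (\<lambda>(c, l). map (\<lambda>(c', w). (c * c', l # w)) (stuffle br u v)) (br a b)))"
    then show ?thesis using that(3) br_part_snd by metis
  qed
qed

lemma stuffle_letters:
  assumes "\<forall>a\<in>set u. A a" "\<forall>b\<in>set v. A b"
    and cl: "\<And>a b. A a \<Longrightarrow> A b \<Longrightarrow> \<forall>l\<in>snd ` set (br a b). A l"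
  shows "\<forall>w\<in>snd ` set (stuffle br u v). \<forall>x\<in>set w. A x"
  using assms
proof (induction br u v rule: stuffle.induct)
  case (1 br v) show ?case using 1(2) by simp
next
  case (2 br a u) show ?case using 2(1) by simp
next
  case (3 br a u b v)
  have au: "A a" "\<forall>x\<in>set u. A x" using 3(4) by simp_all
  have bv: "A b" "\<forall>x\<in>set v. A x" using 3(5) by simp_all
  show ?case
  proof
    fix w assume "w \<in> snd ` set (stuffle br (a # u) (b # v))"
    then show "\<forall>x\<in>set w. A x"
    proof (cases rule: stuffle_cases)
      case (x1 w')
      have "\<forall>w\<in>snd ` set (stuffle br u (b # v)). \<forall>x\<in>set w. A x"
        by (rule 3(1)[OF _ _ 3(6)]) (use au 3(5) in simp_all)
      then show ?thesis using x1 au by auto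
    next
      case (x2 w')
      have "\<forall>w\<in>snd ` set (stuffle br (a # u) v). \<forall>x\<in>set w. A x"
        by (rule 3(2)[OF _ _ 3(6)]) (use bv 3(4) in simp_all)
      then show ?thesis using x2 bv by auto
    next
      case (x3 l w')
      then obtain c where c: "(c, l) \<in> set (br a b)" by auto
      have "\<forall>w\<in>snd ` set (stuffle br u v). \<forall>x\<in>set w. A x"
        by (rule 3(3)[OF c refl _ _ 3(6)]) (use au bv in simp_all)
      moreover have "A l" using 3(6)[OF au(1) bv(1)] x3 by blast
      ultimately show ?thesis using x3 by auto
    qed
  qed
qed

lemma stuffle_hd:
  assumes "u = [] \<or> D (hd u)" "v = [] \<or> D (hd v)"
    and cl: "\<And>a b. D a \<Longrightarrow> D b \<Longrightarrow> \<forall>l\<in>snd ` set (br a b). D l"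
    and w: "w \<in> snd ` set (stuffle br u v)"
  shows "w = [] \<or> D (hd w)"
proof (cases u)
  case Nil then show ?thesis using assms(2) w by auto
next
  case (Cons a u')
  show ?thesis
  proof (cases v)
    case Nil then show ?thesis using assms(1) w Cons by auto
  next
    case (Cons b v')
    have Da: "D a" using assms(1) \<open>u = a # u'\<close> by simp
    have Db: "D b" using assms(2) Cons by simp
    from w[unfolded \<open>u = a # u'\<close> Cons] show ?thesis
    proof (cases rule: stuffle_cases)
      case (x1 w') then show ?thesis using Da by simp
    next
      case (x2 w') then show ?thesis using Db by simp
    next
      case (x3 l w') then show ?thesis using cl[OF Da Db] by auto
    qed
  qed
qed

lemma good_intro:
  assumes "0 \<le> r" "r < 1" "\<And>n. n \<ge> 1 \<Longrightarrow> norm (g n) \<le> C * r ^ n"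
    "\<And>h. h \<in> set hs \<Longrightarrow> \<exists>B. \<forall>n\<ge>1. norm (h n) \<le> B"
  shows "good (g # hs)"
proof -
  have "\<exists>B. \<forall>h\<in>set hs. \<forall>n\<ge>1. norm (h n) \<le> B" using assms(4)
  proof (induction hs)
    case Nil then show ?case by simp
  next
    case (Cons h hs)
    then obtain B1 B2 where "\<forall>n\<ge>1. norm (h n) \<le> B1" "\<forall>h\<in>set hs. \<forall>n\<ge>1. norm (h n) \<le> B2" by force
    then have "\<forall>h'\<in>set (h # hs). \<forall>n\<ge>1. norm (h' n) \<le> max B1 B2" by force
    then show ?case by blast
  qed
  moreover have "\<exists>C r. 0 \<le> r \<and> r < 1 \<and> (\<forall>n\<ge>1. norm (g n) \<le> C * r ^ n)"
    using assms(1,2,3) by blast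
  ultimately show ?thesis unfolding good_def list.sel by blast
qed

lemma lc_eval_T_cons:
  "lc_eval (\<lambda>w. T N (g # map val w)) L = (\<Sum>n\<in>{1..<N}. g n * lc_eval (\<lambda>w. T n (map val w)) L)"
  by (simp add: lc_eval_sum lc_eval_cmult)

definition hf :: "complex \<Rightarrow> int \<Rightarrow> int \<Rightarrow> nat \<Rightarrow> complex" where
  "hf q t s n = q powi (int n * t) / (1 - q ^ n) powi s"

lemma zq_ts_ZZ: "length t = length s \<Longrightarrow> zq_ts q t s = ZZ (map2 (hf q) t s)"
  unfolding zq_ts_def ZZ_def PP_def hf_def
  by (auto intro!: infsum_cong prod.cong simp: nth_zip)

lemma powi_bound:
  fixes z :: complex
  assumes "0 < c" "c \<le> 1" "c \<le> norm z" "norm z \<le> 2"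
  shows "norm (1 / z powi k) \<le> (2 / c) ^ nat \<bar>k\<bar>"
proof (cases "k \<ge> 0")
  case True
  then obtain m where k: "k = int m" by (metis nonneg_eq_int)
  have z0: "0 < norm z" using assms by linarith
  have "norm (1 / z powi k) = 1 / norm z ^ m" by (simp add: k norm_divide norm_power)
  also have "\<dots> \<le> 1 / c ^ m" using assms z0 by (intro divide_left_mono power_mono) (auto intro!: mult_pos_pos)
  also have "\<dots> = (1 / c) ^ m" by (simp add: power_divide)
  also have "\<dots> \<le> (2 / c) ^ m" using assms by (intro power_mono divide_right_mono) auto
  finally show ?thesis by (simp add: k)
next
  case False
  then obtain m where k: "k = - int m" by (metis nonpos_int_cases not_le order_less_imp_le)
  have "norm (1 / z powi k) = norm z ^ m" by (simp add: k power_int_minus norm_power divide_inverse)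
  also have "\<dots> \<le> 2 ^ m" using assms by (intro power_mono) auto
  also have "\<dots> \<le> (2 / c) ^ m" using assms by (intro power_mono) (auto simp: field_simps)
  finally show ?thesis by (simp add: k)
qed


definition vII :: "complex \<Rightarrow> nat \<Rightarrow> nat \<Rightarrow> complex" where
  "vII q s = hf q (int s) (int s)"

lemma vII_fun: "vII q = (\<lambda>s. hf q (int s) (int s))"
  by (rule ext) (simp add: vII_def)

lemma zqII_ZZ: "zqII q w = ZZ (map (vII q) w)"
  by (simp add: zqII_def zq_ts_ZZ map2_map_map vII_fun)

lemma vII_eq: "vII q s n = q ^ (n * s) / (1 - q ^ n) ^ s"
  by (simp add: vII_def hf_def of_nat_mult[symmetric] del: of_nat_mult)

fun tI :: "letterI \<Rightarrow> int" where
  "tI Theta = 1"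
| "tI (Z s) = (if s \<ge> 1 then int s - 1 else 0)"

fun sI :: "letterI \<Rightarrow> int" where
  "sI Theta = 1"
| "sI (Z s) = int s"

definition vI :: "complex \<Rightarrow> letterI \<Rightarrow> nat \<Rightarrow> complex" where
  "vI q a n = MI q n a"

lemma hf_Zs: "s \<ge> 1 \<Longrightarrow> hf q (int s - 1) (int s) n = q ^ ((s - 1) * n) / (1 - q ^ n) ^ s"
proof -
  assume "s \<ge> 1"
  then have e: "int n * (int s - 1) = int ((s - 1) * n)" by (simp add: of_nat_diff)
  show ?thesis by (simp only: hf_def e power_int_of_nat)
qed

lemma vI_hf: "vI q a = hf q (tI a) (sI a)"
proof
  fix n show "vI q a n = hf q (tI a) (sI a) n"
  proof (cases a)
    case Theta then show ?thesis by (simp add: vI_def hf_def)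
  next
    case (Z s)
    show ?thesis
    proof (cases "s = 0")
      case True then show ?thesis using Z by (simp add: vI_def hf_def)
    next
      case False
      then have "s \<ge> 1" by simp
      then show ?thesis using Z hf_Zs[of s q n] by (simp add: vI_def)
    qed
  qed
qed

lemma zqI_ZZ: "zqI q w = ZZ (map (vI q) w)"
  unfolding zqI_def ZZ_def length_map by (intro infsum_cong) (simp add: PP_def vI_def)

lemma MI_Z: "MI q n (Z (Suc s)) = (q ^ n) ^ s / (1 - q ^ n) ^ Suc s"
  by (simp add: power_mult[symmetric] mult.commute)

lemma alg_ZZ:
  fixes x z :: complex
  assumes "z \<noteq> 0" "x = 1 - z"
  shows "x ^ Suc (a + b) / z ^ Suc (Suc (a + b)) + x ^ (a + b) / z ^ Suc (a + b)
     = x ^ a / z ^ Suc a * (x ^ b / z ^ Suc b)"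
proof -
  have "x ^ Suc (a + b) / z ^ Suc (Suc (a + b)) + x ^ (a + b) / z ^ Suc (a + b)
      = x ^ (a + b) * (x + z) / z ^ Suc (Suc (a + b))"
    using assms(1) by (simp add: field_simps)
  also have "\<dots> = x ^ (a + b) / z ^ Suc (Suc (a + b))" using assms(2) by simp
  also have "\<dots> = x ^ a / z ^ Suc a * (x ^ b / z ^ Suc b)"
    by (simp add: power_add field_simps)
  finally show ?thesis .
qed

lemma alg_TZ:
  fixes x z :: complex
  assumes "z \<noteq> 0"
  shows "x ^ Suc a / z ^ Suc (Suc a) = x / z * (x ^ a / z ^ Suc a)"
  using assms by (simp add: field_simps)

lemma alg_TT:
  fixes x z :: complex
  assumes "z \<noteq> 0" "x = 1 - z"
  shows "x / z ^ 2 - x / z = x / z * (x / z)"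
proof -
  have "x * x + x * z = x * (x + z)" by (simp add: algebra_simps)
  also have "\<dots> = x" using assms(2) by simp
  finally have "x * x + x * z = x" .
  then show ?thesis using assms(1) by (simp add: field_simps power2_eq_square)
qed


fun vIII :: "complex \<Rightarrow> int \<times> int list \<Rightarrow> (nat \<Rightarrow> complex) list" where
  "vIII q (k, w) = hf q 1 k # map (hf q 0) w"

lemma zqIII_ZZ: "zqIII q x = ZZ (vIII q x)"
  by (cases x) (simp add: zqIII_def zq_ts_ZZ zip_replicate1 o_def)

lemma hf0: "hf q 0 s n = 1 / (1 - q ^ n) powi s"
  by (simp add: hf_def)

lemma hf1: "hf q 1 s n = q ^ n / (1 - q ^ n) powi s"
  by (simp add: hf_def)


definition Zf :: "complex \<Rightarrow> nat \<Rightarrow> nat \<Rightarrow> complex" where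
  "Zf q s = hf q (int s - 1) (int s)"

fun vIV :: "complex \<Rightarrow> wordIV \<Rightarrow> (nat \<Rightarrow> complex) list" where
  "vIV q One = []"
| "vIV q (ThW u) = vII q 1 # map (vII q) u"
| "vIV q (ZW s u) = Zf q s # map (vII q) u"

lemma ZZ_Nil: "ZZ [] = 1"
  by (simp add: ZZ_def dec_tuples_0 PP_def)

lemma zqIV_ZZ: "zqIV q x = ZZ (vIV q x)"
proof (cases x)
  case One then show ?thesis by (simp add: ZZ_Nil)
next
  case (ThW u)
  have "vII q 1 = hf q 1 1" by (simp add: vII_fun)
  then show ?thesis using ThW by (simp add: zq_ts_ZZ map2_map_map vII_fun)
next
  case (ZW s u)
  then show ?thesis by (simp add: zq_ts_ZZ map2_map_map vII_fun Zf_def)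
qed

context
  fixes q :: complex
  assumes q: "norm q < 1"
begin

lemma qn_le: "n \<ge> 1 \<Longrightarrow> norm (q ^ n) \<le> norm q"
  using power_decreasing[of 1 n "norm q"] q by (simp add: norm_power)

lemma z_nz: "n \<ge> 1 \<Longrightarrow> 1 - q ^ n \<noteq> 0"
proof
  assume "n \<ge> 1" "1 - q ^ n = 0"
  then have "norm (q ^ n) = 1" by simp
  moreover have "norm (q ^ n) \<le> norm q" using qn_le \<open>n \<ge> 1\<close> by simp
  ultimately show False using q by simp
qed

lemma z_lb: "n \<ge> 1 \<Longrightarrow> 1 - norm q \<le> norm (1 - q ^ n)"
proof -
  assume n: "n \<ge> 1"
  have "norm (q ^ n) \<le> norm q" using qn_le n by simp
  moreover have "norm (1::complex) - norm (q ^ n) \<le> norm (1 - q ^ n)" by (rule norm_triangle_ineq2)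
  ultimately show ?thesis by simp
qed

lemma z_ub: "norm (1 - q ^ n) \<le> 2"
proof -
  have "norm (1 - q ^ n) \<le> norm (1::complex) + norm (q ^ n)" by (rule norm_triangle_ineq4)
  moreover have "norm (q ^ n) \<le> 1" using q by (simp add: norm_power power_le_one)
  ultimately show ?thesis by simp
qed

lemma hf_bound_gen:
  assumes "t \<ge> 0" "n \<ge> 1"
  shows "norm (hf q t s n) \<le> norm q ^ (n * nat t) * (2 / (1 - norm q)) ^ nat \<bar>s\<bar>"
proof -
  have "norm (hf q t s n) = norm q ^ (n * nat t) * norm (1 / (1 - q ^ n) powi s)"
    using assms by (simp add: hf_def norm_divide norm_power_int power_int_nonneg_exp nat_mult_distrib norm_power)
  also have "\<dots> \<le> norm q ^ (n * nat t) * (2 / (1 - norm q)) ^ nat \<bar>s\<bar>"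
    using q assms z_lb[of n] z_ub[of n] by (intro mult_left_mono powi_bound) auto
  finally show ?thesis .
qed

lemma hf_bound: "t \<ge> 0 \<Longrightarrow> \<exists>B. \<forall>n\<ge>1. norm (hf q t s n) \<le> B"
proof (intro exI allI impI)
  fix n :: nat assume "t \<ge> 0" "n \<ge> 1"
  have "norm q ^ (n * nat t) \<le> 1" using q by (simp add: power_le_one)
  then show "norm (hf q t s n) \<le> (2 / (1 - norm q)) ^ nat \<bar>s\<bar>"
    using order_trans[OF hf_bound_gen[OF \<open>t \<ge> 0\<close> \<open>n \<ge> 1\<close>, of s]
      mult_right_mono[OF \<open>norm q ^ (n * nat t) \<le> 1\<close>, of "(2 / (1 - norm q)) ^ nat \<bar>s\<bar>"]] q
    by simp
qed

lemma hf_decay: "t \<ge> 1 \<Longrightarrow> n \<ge> 1 \<Longrightarrow> norm (hf q t s n) \<le> (2 / (1 - norm q)) ^ nat \<bar>s\<bar> * norm q ^ n"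
proof -
  assume t: "t \<ge> 1" and n: "n \<ge> 1"
  have "norm q ^ (n * nat t) \<le> norm q ^ n"
    using q t by (intro power_decreasing) (auto simp: mult_le_cancel_left1)
  moreover have "0 \<le> (2 / (1 - norm q)) ^ nat \<bar>s\<bar>" using q by simp
  ultimately show ?thesis
    using hf_bound_gen[of t n s] t n mult_left_mono[of "norm q ^ (n * nat t)" "norm q ^ n" "(2 / (1 - norm q)) ^ nat \<bar>s\<bar>"]
    by (simp add: mult.commute)
qed

lemma good_hf:
  assumes "t \<ge> 1" "\<And>h. h \<in> set hs \<Longrightarrow> \<exists>B. \<forall>n\<ge>1. norm (h n) \<le> B"
  shows "good (hf q t s # hs)"
  by (rule good_intro[of "norm q"]) (use q assms hf_decay in auto)

lemma brII: "n \<ge> 1 \<Longrightarrow> lc_eval (\<lambda>l. vII q l n) (bracketII a b) = vII q a n * vII q b n"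
  using z_nz[of n] by (simp add: bracketII_def vII_eq power_add add_mult_distrib2)

lemma identII: "lc_eval (\<lambda>w. T N (map (vII q) w)) (stuffleII x y) = T N (map (vII q) x) * T N (map (vII q) y)"
  unfolding stuffleII_def by (rule stuffle_T[of UNIV]) (auto simp: brII)

lemma vII_bound: "\<exists>B. \<forall>n\<ge>1. norm (vII q s n) \<le> B"
  unfolding vII_def by (rule hf_bound) simp

lemma goodII: "admII w \<Longrightarrow> good (map (vII q) w)"
proof (cases w)
  case Nil then show ?thesis by (simp add: good_def)
next
  case (Cons a w')
  assume "admII w"
  then have "1 \<le> a" using Cons by (simp add: admII_def)
  then show ?thesis unfolding Cons list.map vII_def[of q a]
    by (intro good_hf) (use vII_bound in auto)
qed

theorem partII: "\<forall>u v. (\<forall>(c, w)\<in>set u. admII w) \<longrightarrow> (\<forall>(c, w)\<in>set v. admII w) \<longrightarrow>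
            lc_eval (zqII q) (lc_bilin stuffleII u v) = lc_eval (zqII q) u * lc_eval (zqII q) v"
proof (intro allI impI)
  fix u v :: "nat list lc"
  assume u: "\<forall>(c, w)\<in>set u. admII w" and v: "\<forall>(c, w)\<in>set v. admII w"
  have conv: "(\<lambda>N. T N (map (vII q) w)) \<longlonglongrightarrow> zqII q w" if "admII w" for w
    unfolding zqII_ZZ using that by (intro good_tendsto goodII)
  have clos: "admII w" if "admII x" "admII y" "w \<in> snd ` set (stuffleII x y)" for x y w
  proof -
    have br: "\<forall>l\<in>snd ` set (bracketII a b). 1 \<le> l" if "1 \<le> a" "1 \<le> b" for a b :: nat
      using that by (simp add: bracketII_def)
    have "w = [] \<or> 1 \<le> hd w"
      by (rule stuffle_hd[where D = "\<lambda>a. 1 \<le> a", OF _ _ br])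
         (use that in \<open>simp_all add: admII_def stuffleII_def\<close>)
    then show "admII w" by (simp add: admII_def)
  qed
  show "lc_eval (zqII q) (lc_bilin stuffleII u v) = lc_eval (zqII q) u * lc_eval (zqII q) v"
    by (rule assemble[where adm = admII and F = "\<lambda>N w. T N (map (vII q) w)", OF identII conv clos u v])
qed

lemma brI:
  assumes "validI a" "validI b" "n \<ge> 1"
  shows "lc_eval (\<lambda>l. vI q l n) (bracketI a b) = vI q a n * vI q b n"
proof -
  define x where "x = q ^ n"
  define z where "z = 1 - q ^ n"
  have z: "z \<noteq> 0" using z_nz assms(3) by (simp add: z_def)
  have xz: "x = 1 - z" by (simp add: x_def z_def)
  have VT: "vI q Theta n = x / z" by (simp add: vI_def x_def z_def)
  have VZ: "vI q (Z (Suc s)) n = x ^ s / z ^ Suc s" for s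
    unfolding vI_def MI_Z x_def z_def ..
  have VZ2: "vI q (Z 2) n = x / z ^ 2" using VZ[of 1] by (simp add: numeral_2_eq_2)
  show ?thesis
  proof (cases a)
    case Theta
    show ?thesis
    proof (cases b)
      case Theta
      then show ?thesis using \<open>a = Theta\<close> alg_TT[OF z xz] by (simp add: VT VZ2)
    next
      case (Z l)
      then obtain l' where l: "l = Suc l'" using assms(2) by (cases l) auto
      show ?thesis using \<open>a = Theta\<close> Z l alg_TZ[OF z, of x l'] by (simp add: VT VZ)
    qed
  next
    case (Z k)
    then obtain k' where k: "k = Suc k'" using assms(1) by (cases k) auto
    show ?thesis
    proof (cases b)
      case Theta
      show ?thesis using \<open>b = Theta\<close> Z k alg_TZ[OF z, of x k'] by (simp add: VT VZ mult.commute)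
    next
      case Zl: (Z l)
      then obtain l' where l: "l = Suc l'" using assms(2) by (cases l) auto
      show ?thesis using Z Zl k l alg_ZZ[OF z xz, of k' l'] by (simp add: VZ)
    qed
  qed
qed

lemma identI:
  assumes "admI x" "admI y"
  shows "lc_eval (\<lambda>w. T N (map (vI q) w)) (stuffleI x y) = T N (map (vI q) x) * T N (map (vI q) y)"
  unfolding stuffleI_def
  by (rule stuffle_T[of "{a. validI a}"]) (use assms brI in \<open>auto simp: admI_def\<close>)

lemma vI_bound: "\<exists>B. \<forall>n\<ge>1. norm (vI q a n) \<le> B"
  unfolding vI_hf by (rule hf_bound) (cases a; simp)

lemma goodI: "admI w \<Longrightarrow> good (map (vI q) w)"
proof (cases w)
  case Nil then show ?thesis by (simp add: good_def)
next
  case (Cons a w')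
  assume "admI w"
  then have "validI a" "a \<noteq> Z 1" using Cons by (simp_all add: admI_def)
  then have "tI a \<ge> 1" by (cases a) auto
  then show ?thesis unfolding Cons list.map vI_hf[of q a]
    by (intro good_hf) (use vI_bound in auto)
qed

theorem partI: "\<forall>u v. (\<forall>(c, w)\<in>set u. admI w) \<longrightarrow> (\<forall>(c, w)\<in>set v. admI w) \<longrightarrow>
            lc_eval (zqI q) (lc_bilin stuffleI u v) = lc_eval (zqI q) u * lc_eval (zqI q) v"
proof (intro allI impI)
  fix u v :: "letterI list lc"
  assume u: "\<forall>(c, w)\<in>set u. admI w" and v: "\<forall>(c, w)\<in>set v. admI w"
  have conv: "(\<lambda>N. T N (map (vI q) w)) \<longlonglongrightarrow> zqI q w" if "admI w" for w
    unfolding zqI_ZZ using that by (intro good_tendsto goodI)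
  have clos: "admI w" if xy: "admI x" "admI y" and w: "w \<in> snd ` set (stuffleI x y)" for x y w
  proof -
    have brv: "\<forall>l\<in>snd ` set (bracketI a b). validI l" if "validI a" "validI b" for a b
      using that by (cases a; cases b) auto
    have brd: "\<forall>l\<in>snd ` set (bracketI a b). validI l \<and> l \<noteq> Z 1"
      if "validI a \<and> a \<noteq> Z 1" "validI b \<and> b \<noteq> Z 1" for a b
      using that by (cases a; cases b) auto
    have "\<forall>w\<in>snd ` set (stuffleI x y). \<forall>a\<in>set w. validI a"
      unfolding stuffleI_def by (rule stuffle_letters[OF _ _ brv]) (use xy in \<open>simp_all add: admI_def\<close>)
    then have 1: "\<forall>a\<in>set w. validI a" using w by blast
    have hx: "x = [] \<or> (validI (hd x) \<and> hd x \<noteq> Z 1)" using xy(1) by (cases x) (auto simp: admI_def)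
    have hy: "y = [] \<or> (validI (hd y) \<and> hd y \<noteq> Z 1)" using xy(2) by (cases y) (auto simp: admI_def)
    have "w = [] \<or> (validI (hd w) \<and> hd w \<noteq> Z 1)"
      by (rule stuffle_hd[where D = "\<lambda>a. validI a \<and> a \<noteq> Z 1", OF hx hy brd])
         (use w in \<open>simp_all add: stuffleI_def\<close>)
    then show "admI w" using 1 by (auto simp: admI_def)
  qed
  show "lc_eval (zqI q) (lc_bilin stuffleI u v) = lc_eval (zqI q) u * lc_eval (zqI q) v"
    by (rule assemble[where adm = admI and F = "\<lambda>N w. T N (map (vI q) w)", OF identI conv clos u v])
qed

lemma brB: "n \<ge> 1 \<Longrightarrow> lc_eval (\<lambda>l. hf q 0 l n) (bracketB a b) = hf q 0 a n * hf q 0 b n"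
proof -
  assume n: "n \<ge> 1"
  have "(1 - q ^ n) powi (a + b) = (1 - q ^ n) powi a * (1 - q ^ n) powi b"
    by (rule power_int_add) (use z_nz[OF n] in simp)
  then show ?thesis by (simp add: bracketB_def hf0)
qed

lemma identB: "lc_eval (\<lambda>w. T N (map (hf q 0) w)) (stuffleB x y) = T N (map (hf q 0) x) * T N (map (hf q 0) y)"
  unfolding stuffleB_def by (rule stuffle_T[of UNIV]) (auto simp: brB)

lemma sigma_id: "m \<ge> 1 \<Longrightarrow> hf q 0 l m - hf q 0 (l - 1) m = hf q 1 l m"
proof -
  assume m: "m \<ge> 1"
  define z where "z = 1 - q ^ m"
  have z: "z \<noteq> 0" using z_nz[OF m] by (simp add: z_def)
  have P: "z powi l = z powi (l - 1) * z" using power_int_minus_mult[of z l] z by simp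
  have P0: "z powi (l - 1) \<noteq> 0" using z by simp
  have "hf q 0 l m - hf q 0 (l - 1) m = 1 / z powi l - 1 / z powi (l - 1)"
    by (simp add: hf0 z_def)
  also have "\<dots> = (1 - z) / z powi l" using z P0 by (simp add: P field_simps)
  also have "\<dots> = hf q 1 l m" by (simp add: hf1 z_def)
  finally show ?thesis .
qed

lemma diag_III: "n \<ge> 1 \<Longrightarrow> hf q 1 k n * hf q 1 l n = hf q 1 (k + l) n - hf q 1 (k + l - 1) n"
proof -
  assume n: "n \<ge> 1"
  define z where "z = 1 - q ^ n"
  define x where "x = q ^ n"
  have z: "z \<noteq> 0" using z_nz[OF n] by (simp add: z_def)
  have P: "z powi (k + l) = z powi (k + l - 1) * z" using power_int_minus_mult[of z "k + l"] z by simp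
  have Pk: "z powi (k + l) = z powi k * z powi l" using z by (simp add: power_int_add)
  have P0: "z powi (k + l - 1) \<noteq> 0" "z powi k \<noteq> 0" "z powi l \<noteq> 0" using z by simp_all
  have "hf q 1 (k + l) n - hf q 1 (k + l - 1) n = x / z powi (k + l) - x / z powi (k + l - 1)"
    by (simp add: hf1 z_def x_def)
  also have "\<dots> = x * (1 - z) / z powi (k + l)" using z P0 by (simp add: P field_simps)
  also have "\<dots> = x * x / z powi (k + l)" by (simp add: x_def z_def)
  also have "\<dots> = hf q 1 k n * hf q 1 l n"
  proof -
    have zx: "1 - x = z" by (simp add: x_def z_def)
    show ?thesis unfolding hf1 z_def[symmetric] x_def[symmetric] Pk by (simp add: zx)
  qed
  finally show ?thesis by simp
qed

lemma sigma_minus_eval: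
  "lc_eval (\<lambda>w. T n (map (hf q 0) w)) (sigma_minus (l, v)) = (\<Sum>m\<in>{1..<n}. hf q 1 l m * T m (map (hf q 0) v))"
proof -
  have "lc_eval (\<lambda>w. T n (map (hf q 0) w)) (sigma_minus (l, v))
     = (\<Sum>m\<in>{1..<n}. hf q 0 l m * T m (map (hf q 0) v)) - (\<Sum>m\<in>{1..<n}. hf q 0 (l - 1) m * T m (map (hf q 0) v))"
    by (simp add: sigma_minus_def)
  also have "\<dots> = (\<Sum>m\<in>{1..<n}. (hf q 0 l m - hf q 0 (l - 1) m) * T m (map (hf q 0) v))"
    by (simp add: sum_subtractf left_diff_distrib)
  also have "\<dots> = (\<Sum>m\<in>{1..<n}. hf q 1 l m * T m (map (hf q 0) v))"
    by (rule sum.cong) (auto simp: sigma_id)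
  finally show ?thesis .
qed

lemma identIII_pair:
  "lc_eval (\<lambda>x. T N (vIII q x)) (stuffleIII (k, u) (l, v)) = T N (vIII q (k, u)) * T N (vIII q (l, v))"
proof -
  let ?TB = "\<lambda>n w. T n (map (hf q 0) w)"
  let ?F = "hf q 1"
  have bl1: "lc_eval (?TB n) (lc_bilin stuffleB [(1, u)] L) = ?TB n u * lc_eval (?TB n) L" for n L
    using lc_eval_bilin[of "[(1, u)]" L "?TB n" stuffleB "?TB n" "?TB n"] identB by simp
  have bl2: "lc_eval (?TB n) (lc_bilin stuffleB L [(1, v)]) = lc_eval (?TB n) L * ?TB n v" for n L
    using lc_eval_bilin[of L "[(1, v)]" "?TB n" stuffleB "?TB n" "?TB n"] identB by simp
  have vk: "\<And>k w. T N (vIII q (k, w)) = T N (?F k # map (hf q 0) w)" by simp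
  have "lc_eval (\<lambda>x. T N (vIII q x)) (stuffleIII (k, u) (l, v))
     = (\<Sum>n\<in>{1..<N}. ?F k n * (?TB n u * (\<Sum>m\<in>{1..<n}. ?F l m * ?TB m v)))
     + (\<Sum>n\<in>{1..<N}. ?F l n * ((\<Sum>m\<in>{1..<n}. ?F k m * ?TB m u) * ?TB n v))
     + (\<Sum>n\<in>{1..<N}. ?F (k + l) n * (?TB n u * ?TB n v))
     - (\<Sum>n\<in>{1..<N}. ?F (k + l - 1) n * (?TB n u * ?TB n v))"
    unfolding stuffleIII.simps lc_eval_append lc_eval_lc_map lc_eval_neg vk lc_eval_T_cons
    by (simp only: bl1 bl2 identB sigma_minus_eval) simp
  also have "\<dots> = (\<Sum>n\<in>{1..<N}. ?F k n * ?TB n u * (\<Sum>m\<in>{1..<n}. ?F l m * ?TB m v))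
     + (\<Sum>m\<in>{1..<N}. ?F l m * ?TB m v * (\<Sum>n\<in>{1..<m}. ?F k n * ?TB n u))
     + (\<Sum>n\<in>{1..<N}. ?F k n * ?TB n u * (?F l n * ?TB n v))"
  proof -
    have "(\<Sum>n\<in>{1..<N}. ?F (k + l) n * (?TB n u * ?TB n v)) - (\<Sum>n\<in>{1..<N}. ?F (k + l - 1) n * (?TB n u * ?TB n v))
        = (\<Sum>n\<in>{1..<N}. ?F k n * ?TB n u * (?F l n * ?TB n v))"
      unfolding sum_subtractf[symmetric]
    proof (rule sum.cong)
      fix n assume "n \<in> {1..<N}"
      then have eq: "?F k n * ?F l n = ?F (k + l) n - ?F (k + l - 1) n" by (intro diag_III) auto
      have "?F (k + l) n * (?TB n u * ?TB n v) - ?F (k + l - 1) n * (?TB n u * ?TB n v)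
          = (?F (k + l) n - ?F (k + l - 1) n) * (?TB n u * ?TB n v)" by (simp add: algebra_simps)
      also have "\<dots> = ?F k n * ?TB n u * (?F l n * ?TB n v)" by (simp add: eq[symmetric] algebra_simps)
      finally show "?F (k + l) n * (?TB n u * ?TB n v) - ?F (k + l - 1) n * (?TB n u * ?TB n v)
          = ?F k n * ?TB n u * (?F l n * ?TB n v)" .
    qed simp
    then show ?thesis by (simp add: algebra_simps)
  qed
  also have "\<dots> = T N (vIII q (k, u)) * T N (vIII q (l, v))"
    by (simp only: vk T.simps split_prod_sum)
  finally show ?thesis .
qed

lemma identIII: "lc_eval (\<lambda>x. T N (vIII q x)) (stuffleIII x y) = T N (vIII q x) * T N (vIII q y)"
  using identIII_pair by (cases x; cases y) auto

lemma goodIII: "good (vIII q x)"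
proof (cases x)
  case (Pair k w)
  show ?thesis unfolding Pair vIII.simps
    by (rule good_hf) (use hf_bound[of 0] in auto)
qed

theorem partIII: "\<forall>u v. lc_eval (zqIII q) (lc_bilin stuffleIII u v) = lc_eval (zqIII q) u * lc_eval (zqIII q) v"
proof (intro allI)
  fix u v :: "(int \<times> int list) lc"
  have conv: "(\<lambda>N. T N (vIII q w)) \<longlonglongrightarrow> zqIII q w" if "True" for w
    unfolding zqIII_ZZ by (intro good_tendsto goodIII)
  show "lc_eval (zqIII q) (lc_bilin stuffleIII u v) = lc_eval (zqIII q) u * lc_eval (zqIII q) v"
    by (rule assemble[where adm = "\<lambda>_. True" and F = "\<lambda>N w. T N (vIII q w)", OF identIII conv]) auto
qed

lemma identC: "lc_eval (\<lambda>w. T N (map (vII q) w)) (stuffleC x y) = T N (map (vII q) x) * T N (map (vII q) y)"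
  unfolding stuffleC_def by (rule stuffle_T[of UNIV]) (auto simp: brII)

lemma vII_xz: "vII q s n = (q ^ n) ^ s / (1 - q ^ n) ^ s"
  by (simp add: vII_eq power_mult)

lemma Zf_xz: "Zf q (Suc s) n = (q ^ n) ^ s / (1 - q ^ n) ^ Suc s"
  using hf_Zs[of "Suc s" q n] by (simp add: Zf_def power_mult[symmetric] mult.commute)

lemma Zf_split: "l \<ge> 1 \<Longrightarrow> n \<ge> 1 \<Longrightarrow> Zf q l n = vII q l n + vII q (l - 1) n"
proof -
  assume "l \<ge> 1" "n \<ge> 1"
  then obtain l' where l: "l = Suc l'" by (cases l) auto
  define x where "x = q ^ n"
  define z where "z = 1 - q ^ n"
  have z: "z \<noteq> 0" using z_nz \<open>n \<ge> 1\<close> by (simp add: z_def)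
  have xz: "x + z = 1" by (simp add: x_def z_def)
  have "x ^ l' / z ^ Suc l' = x ^ Suc l' / z ^ Suc l' + x ^ l' / z ^ l'"
  proof -
    have "x ^ Suc l' / z ^ Suc l' + x ^ l' / z ^ l' = x ^ l' * (x + z) / z ^ Suc l'"
      using z by (simp add: field_simps)
    then show ?thesis using xz by simp
  qed
  then show ?thesis using Zf_xz[of l' n] vII_xz[of l n] vII_xz[of "l - 1" n] l
    by (simp add: x_def z_def)
qed

lemma Zf_diag: "k \<ge> 1 \<Longrightarrow> l \<ge> 1 \<Longrightarrow> n \<ge> 1 \<Longrightarrow>
   Zf q k n * Zf q l n = Zf q (k + l) n + Zf q (k + l - 1) n"
proof -
  assume "k \<ge> 1" "l \<ge> 1" "n \<ge> 1"
  then obtain k' l' where k: "k = Suc k'" and l: "l = Suc l'" by (cases k; cases l) auto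
  have z: "1 - q ^ n \<noteq> 0" using z_nz \<open>n \<ge> 1\<close> by simp
  have e: "k + l = Suc (Suc (k' + l'))" "k + l - 1 = Suc (k' + l')" using k l by simp_all
  have a1: "Zf q (k + l) n = (q ^ n) ^ Suc (k' + l') / (1 - q ^ n) ^ Suc (Suc (k' + l'))"
    unfolding e(1) by (rule Zf_xz)
  have a2: "Zf q (k + l - 1) n = (q ^ n) ^ (k' + l') / (1 - q ^ n) ^ Suc (k' + l')"
    unfolding e(2) by (rule Zf_xz)
  have a3: "Zf q k n = (q ^ n) ^ k' / (1 - q ^ n) ^ Suc k'" unfolding k by (rule Zf_xz)
  have a4: "Zf q l n = (q ^ n) ^ l' / (1 - q ^ n) ^ Suc l'" unfolding l by (rule Zf_xz)
  show ?thesis unfolding a1 a2 a3 a4 by (rule alg_ZZ[OF z, symmetric]) simp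
qed

lemma Zf_theta: "k \<ge> 1 \<Longrightarrow> n \<ge> 1 \<Longrightarrow>
   Zf q k n * vII q 1 n = Zf q (k + 1) n"
proof -
  assume "k \<ge> 1" "n \<ge> 1"
  then obtain k' where k: "k = Suc k'" by (cases k) auto
  have z: "1 - q ^ n \<noteq> 0" using z_nz \<open>n \<ge> 1\<close> by simp
  have e: "k + 1 = Suc (Suc k')" using k by simp
  have a1: "Zf q (k + 1) n = (q ^ n) ^ Suc k' / (1 - q ^ n) ^ Suc (Suc k')"
    unfolding e by (rule Zf_xz)
  have a3: "Zf q k n = (q ^ n) ^ k' / (1 - q ^ n) ^ Suc k'" unfolding k by (rule Zf_xz)
  have a4: "vII q 1 n = q ^ n / (1 - q ^ n)" by (simp add: vII_xz)
  show ?thesis unfolding a1 a3 a4 using alg_TZ[OF z, of "q ^ n" k'] by (simp add: mult.commute)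
qed

lemma theta_theta: "n \<ge> 1 \<Longrightarrow>
   vII q 1 n * vII q 1 n = Zf q 2 n - vII q 1 n"
proof -
  assume "n \<ge> 1"
  have z: "1 - q ^ n \<noteq> 0" using z_nz \<open>n \<ge> 1\<close> by simp
  have "Zf q 2 n = q ^ n / (1 - q ^ n) ^ 2"
    using Zf_xz[of 1 n] by (simp add: numeral_2_eq_2)
  then show ?thesis using alg_TT[OF z, of "q ^ n"] by (simp add: vII_xz)
qed

lemma sigma_plus_eval: "s \<ge> 1 \<Longrightarrow>
  lc_eval (\<lambda>w. T n (map (vII q) w)) (sigma_plus s u) = (\<Sum>m\<in>{1..<n}. Zf q s m * T m (map (vII q) u))"
proof -
  assume s: "s \<ge> 1"
  have "lc_eval (\<lambda>w. T n (map (vII q) w)) (sigma_plus s u)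
     = (\<Sum>m\<in>{1..<n}. vII q s m * T m (map (vII q) u)) + (\<Sum>m\<in>{1..<n}. vII q (s - 1) m * T m (map (vII q) u))"
    by (simp add: sigma_plus_def)
  also have "\<dots> = (\<Sum>m\<in>{1..<n}. (vII q s m + vII q (s - 1) m) * T m (map (vII q) u))"
    by (simp add: sum.distrib distrib_right)
  also have "\<dots> = (\<Sum>m\<in>{1..<n}. Zf q s m * T m (map (vII q) u))"
    by (rule sum.cong) (use s Zf_split in auto)
  finally show ?thesis .
qed

lemma bilC1: "lc_eval (\<lambda>w. T n (map (vII q) w)) (lc_bilin stuffleC [(1, u)] L)
   = T n (map (vII q) u) * lc_eval (\<lambda>w. T n (map (vII q) w)) L"
  using lc_eval_bilin[of "[(1, u)]" L "\<lambda>w. T n (map (vII q) w)" stuffleC] identC by simp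

lemma bilC2: "lc_eval (\<lambda>w. T n (map (vII q) w)) (lc_bilin stuffleC L [(1, v)])
   = lc_eval (\<lambda>w. T n (map (vII q) w)) L * T n (map (vII q) v)"
  using lc_eval_bilin[of L "[(1, v)]" "\<lambda>w. T n (map (vII q) w)" stuffleC] identC by simp

lemma identIV_ZZ:
  assumes k: "k \<ge> 1" and l: "l \<ge> 1"
  shows "lc_eval (\<lambda>x. T N (vIV q x)) (stuffleIV (ZW k u) (ZW l v)) = T N (vIV q (ZW k u)) * T N (vIV q (ZW l v))"
proof -
  let ?TC = "\<lambda>n w. T n (map (vII q) w)"
  let ?Z = "Zf q"
  have "lc_eval (\<lambda>x. T N (vIV q x)) (stuffleIV (ZW k u) (ZW l v))
     = (\<Sum>n\<in>{1..<N}. ?Z k n * (?TC n u * (\<Sum>m\<in>{1..<n}. ?Z l m * ?TC m v)))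
     + ((\<Sum>n\<in>{1..<N}. ?Z l n * ((\<Sum>m\<in>{1..<n}. ?Z k m * ?TC m u) * ?TC n v))
     + ((\<Sum>n\<in>{1..<N}. ?Z (k + l) n * (?TC n u * ?TC n v))
     + (\<Sum>n\<in>{1..<N}. ?Z (k + l - 1) n * (?TC n u * ?TC n v))))"
    unfolding stuffleIV.simps lc_eval_append lc_eval_lc_map vIV.simps lc_eval_T_cons
    by (simp only: bilC1 bilC2 identC sigma_plus_eval k l)
  also have "\<dots> = (\<Sum>n\<in>{1..<N}. ?Z k n * ?TC n u * (\<Sum>m\<in>{1..<n}. ?Z l m * ?TC m v))
     + (\<Sum>m\<in>{1..<N}. ?Z l m * ?TC m v * (\<Sum>n\<in>{1..<m}. ?Z k n * ?TC n u))
     + (\<Sum>n\<in>{1..<N}. ?Z k n * ?TC n u * (?Z l n * ?TC n v))"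
  proof -
    have "(\<Sum>n\<in>{1..<N}. ?Z (k + l) n * (?TC n u * ?TC n v)) + (\<Sum>n\<in>{1..<N}. ?Z (k + l - 1) n * (?TC n u * ?TC n v))
        = (\<Sum>n\<in>{1..<N}. ?Z k n * ?TC n u * (?Z l n * ?TC n v))"
      unfolding sum.distrib[symmetric]
    proof (rule sum.cong)
      fix n assume "n \<in> {1..<N}"
      then have eq: "?Z k n * ?Z l n = ?Z (k + l) n + ?Z (k + l - 1) n" using k l by (intro Zf_diag) auto
      have "?Z (k + l) n * (?TC n u * ?TC n v) + ?Z (k + l - 1) n * (?TC n u * ?TC n v)
          = (?Z (k + l) n + ?Z (k + l - 1) n) * (?TC n u * ?TC n v)" by (rule distrib_right[symmetric])
      also have "\<dots> = (?Z k n * ?Z l n) * (?TC n u * ?TC n v)" by (simp only: eq)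
      also have "\<dots> = ?Z k n * ?TC n u * (?Z l n * ?TC n v)" by (simp only: mult_ac)
      finally show "?Z (k + l) n * (?TC n u * ?TC n v) + ?Z (k + l - 1) n * (?TC n u * ?TC n v)
          = ?Z k n * ?TC n u * (?Z l n * ?TC n v)" .
    qed simp
    then show ?thesis by (simp add: algebra_simps)
  qed
  also have "\<dots> = T N (vIV q (ZW k u)) * T N (vIV q (ZW l v))"
    by (simp only: vIV.simps T.simps split_prod_sum)
  finally show ?thesis .
qed

lemma identIV_ZT:
  assumes k: "k \<ge> 1"
  shows "lc_eval (\<lambda>x. T N (vIV q x)) (stuffleIV (ZW k u) (ThW v)) = T N (vIV q (ZW k u)) * T N (vIV q (ThW v))"
proof -
  let ?TC = "\<lambda>n w. T n (map (vII q) w)"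
  let ?Z = "Zf q"
  let ?t = "vII q 1"
  have t1: "?TC n (1 # v) = (\<Sum>m\<in>{1..<n}. ?t m * ?TC m v)" for n by simp
  have "lc_eval (\<lambda>x. T N (vIV q x)) (stuffleIV (ZW k u) (ThW v))
     = (\<Sum>n\<in>{1..<N}. ?Z k n * (?TC n u * (\<Sum>m\<in>{1..<n}. ?t m * ?TC m v)))
     + ((\<Sum>n\<in>{1..<N}. ?t n * ((\<Sum>m\<in>{1..<n}. ?Z k m * ?TC m u) * ?TC n v))
     + (\<Sum>n\<in>{1..<N}. ?Z (k + 1) n * (?TC n u * ?TC n v)))"
    unfolding stuffleIV.simps lc_eval_append lc_eval_lc_map vIV.simps lc_eval_T_cons
    by (simp only: bilC2 identC sigma_plus_eval k t1)
  also have "\<dots> = (\<Sum>n\<in>{1..<N}. ?Z k n * ?TC n u * (\<Sum>m\<in>{1..<n}. ?t m * ?TC m v))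
     + (\<Sum>m\<in>{1..<N}. ?t m * ?TC m v * (\<Sum>n\<in>{1..<m}. ?Z k n * ?TC n u))
     + (\<Sum>n\<in>{1..<N}. ?Z k n * ?TC n u * (?t n * ?TC n v))"
  proof -
    have "(\<Sum>n\<in>{1..<N}. ?Z (k + 1) n * (?TC n u * ?TC n v))
        = (\<Sum>n\<in>{1..<N}. ?Z k n * ?TC n u * (?t n * ?TC n v))"
    proof (rule sum.cong)
      fix n assume "n \<in> {1..<N}"
      then have eq: "?Z k n * ?t n = ?Z (k + 1) n" using k by (intro Zf_theta) auto
      have "?Z (k + 1) n * (?TC n u * ?TC n v) = (?Z k n * ?t n) * (?TC n u * ?TC n v)" by (simp only: eq)
      also have "\<dots> = ?Z k n * ?TC n u * (?t n * ?TC n v)" by (simp only: mult_ac)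
      finally show "?Z (k + 1) n * (?TC n u * ?TC n v) = ?Z k n * ?TC n u * (?t n * ?TC n v)" .
    qed simp
    then show ?thesis by (simp add: algebra_simps)
  qed
  also have "\<dots> = T N (vIV q (ZW k u)) * T N (vIV q (ThW v))"
    by (simp only: vIV.simps T.simps split_prod_sum)
  finally show ?thesis .
qed

lemma identIV_TT:
  "lc_eval (\<lambda>x. T N (vIV q x)) (stuffleIV (ThW u) (ThW v)) = T N (vIV q (ThW u)) * T N (vIV q (ThW v))"
proof -
  let ?TC = "\<lambda>n w. T n (map (vII q) w)"
  let ?Z = "Zf q"
  let ?t = "vII q 1"
  have t1: "?TC n (1 # w) = (\<Sum>m\<in>{1..<n}. ?t m * ?TC m w)" for n w by simp
  have "lc_eval (\<lambda>x. T N (vIV q x)) (stuffleIV (ThW u) (ThW v))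
     = (\<Sum>n\<in>{1..<N}. ?t n * (?TC n u * (\<Sum>m\<in>{1..<n}. ?t m * ?TC m v)))
     + ((\<Sum>n\<in>{1..<N}. ?t n * ((\<Sum>m\<in>{1..<n}. ?t m * ?TC m u) * ?TC n v))
     + ((\<Sum>n\<in>{1..<N}. ?Z 2 n * (?TC n u * ?TC n v))
     + - (\<Sum>n\<in>{1..<N}. ?t n * (?TC n u * ?TC n v))))"
    unfolding stuffleIV.simps lc_eval_append lc_eval_lc_map lc_eval_neg vIV.simps lc_eval_T_cons
    by (simp only: identC t1)
  also have "\<dots> = (\<Sum>n\<in>{1..<N}. ?t n * ?TC n u * (\<Sum>m\<in>{1..<n}. ?t m * ?TC m v))
     + (\<Sum>m\<in>{1..<N}. ?t m * ?TC m v * (\<Sum>n\<in>{1..<m}. ?t n * ?TC n u))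
     + (\<Sum>n\<in>{1..<N}. ?t n * ?TC n u * (?t n * ?TC n v))"
  proof -
    have "(\<Sum>n\<in>{1..<N}. ?Z 2 n * (?TC n u * ?TC n v)) - (\<Sum>n\<in>{1..<N}. ?t n * (?TC n u * ?TC n v))
        = (\<Sum>n\<in>{1..<N}. ?t n * ?TC n u * (?t n * ?TC n v))"
      unfolding sum_subtractf[symmetric]
    proof (rule sum.cong)
      fix n assume "n \<in> {1..<N}"
      then have eq: "?t n * ?t n = ?Z 2 n - ?t n" using theta_theta[of n] by auto
      have "?Z 2 n * (?TC n u * ?TC n v) - ?t n * (?TC n u * ?TC n v)
          = (?Z 2 n - ?t n) * (?TC n u * ?TC n v)" by (rule left_diff_distrib[symmetric])
      also have "\<dots> = (?t n * ?t n) * (?TC n u * ?TC n v)" by (simp only: eq)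
      also have "\<dots> = ?t n * ?TC n u * (?t n * ?TC n v)" by (simp only: mult_ac)
      finally show "?Z 2 n * (?TC n u * ?TC n v) - ?t n * (?TC n u * ?TC n v) = ?t n * ?TC n u * (?t n * ?TC n v)" .
    qed simp
    then show ?thesis by (simp add: algebra_simps)
  qed
  also have "\<dots> = T N (vIV q (ThW u)) * T N (vIV q (ThW v))"
    by (simp only: vIV.simps T.simps split_prod_sum)
  finally show ?thesis .
qed

lemma identIV:
  assumes "admIV x" "admIV y"
  shows "lc_eval (\<lambda>x. T N (vIV q x)) (stuffleIV x y) = T N (vIV q x) * T N (vIV q y)"
proof (cases x)
  case One then show ?thesis by simp
next
  case (ThW u)
  show ?thesis
  proof (cases y)
    case One then show ?thesis using ThW by simp
  next
    case (ThW v) then show ?thesis using \<open>x = ThW u\<close> identIV_TT by simp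
  next
    case (ZW l v)
    then have "l \<ge> 1" using assms(2) by simp
    have "stuffleIV (ThW u) (ZW l v) = stuffleIV (ZW l v) (ThW u)" by simp
    then show ?thesis using identIV_ZT[OF \<open>l \<ge> 1\<close>, of N v u] ZW \<open>x = ThW u\<close> by (simp add: mult.commute)
  qed
next
  case (ZW k u)
  then have k: "k \<ge> 1" using assms(1) by simp
  show ?thesis
  proof (cases y)
    case One then show ?thesis using ZW by simp
  next
    case (ThW v) then show ?thesis using ZW identIV_ZT[OF k] by simp
  next
    case (ZW l v)
    then have "l \<ge> 1" using assms(2) by simp
    then show ?thesis using ZW \<open>x = ZW k u\<close> identIV_ZZ[OF k] by simp
  qed
qed

lemma goodIV: "admIV x \<Longrightarrow> good (vIV q x)"
proof (cases x)
  case One then show ?thesis by (simp add: good_def)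
next
  case (ThW u)
  have "vII q 1 = hf q 1 1" by (simp add: vII_fun)
  then show ?thesis unfolding ThW vIV.simps
    by (simp only:) (rule good_hf, simp, use vII_bound in auto)
next
  case (ZW s u)
  assume "admIV x"
  then have "s \<ge> 2" using ZW by simp
  then show ?thesis unfolding ZW vIV.simps Zf_def
    by (intro good_hf) (use vII_bound in auto)
qed

lemma closIV: "admIV x \<Longrightarrow> admIV y \<Longrightarrow> w \<in> snd ` set (stuffleIV x y) \<Longrightarrow> admIV w"
  by (cases x; cases y) (auto simp: lc_map_def)

theorem partIV: "\<forall>u v. (\<forall>(c, w)\<in>set u. admIV w) \<longrightarrow> (\<forall>(c, w)\<in>set v. admIV w) \<longrightarrow>
            lc_eval (zqIV q) (lc_bilin stuffleIV u v) = lc_eval (zqIV q) u * lc_eval (zqIV q) v"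
proof (intro allI impI)
  fix u v :: "wordIV lc"
  assume u: "\<forall>(c, w)\<in>set u. admIV w" and v: "\<forall>(c, w)\<in>set v. admIV w"
  have conv: "(\<lambda>N. T N (vIV q w)) \<longlonglongrightarrow> zqIV q w" if "admIV w" for w
    unfolding zqIV_ZZ using that by (intro good_tendsto goodIV)
  show "lc_eval (zqIV q) (lc_bilin stuffleIV u v) = lc_eval (zqIV q) u * lc_eval (zqIV q) v"
    by (rule assemble[where adm = admIV and F = "\<lambda>N w. T N (vIV q w)", OF identIV conv closIV u v])
qed

end


theorem theorem5p1:
  fixes q :: complex
  assumes "norm q < 1"
  shows "(\<forall>u v. (\<forall>(c, w)\<in>set u. admI w) \<longrightarrow> (\<forall>(c, w)\<in>set v. admI w) \<longrightarrow>
            lc_eval (zqI q) (lc_bilin stuffleI u v) = lc_eval (zqI q) u * lc_eval (zqI q) v)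
       \<and> (\<forall>u v. (\<forall>(c, w)\<in>set u. admII w) \<longrightarrow> (\<forall>(c, w)\<in>set v. admII w) \<longrightarrow>
            lc_eval (zqII q) (lc_bilin stuffleII u v) = lc_eval (zqII q) u * lc_eval (zqII q) v)
       \<and> (\<forall>u v.
            lc_eval (zqIII q) (lc_bilin stuffleIII u v) = lc_eval (zqIII q) u * lc_eval (zqIII q) v)
       \<and> (\<forall>u v. (\<forall>(c, w)\<in>set u. admIV w) \<longrightarrow> (\<forall>(c, w)\<in>set v. admIV w) \<longrightarrow>
            lc_eval (zqIV q) (lc_bilin stuffleIV u v) = lc_eval (zqIV q) u * lc_eval (zqIV q) v)"
  using partI[OF assms] partII[OF assms] partIII[OF assms] partIV[OF assms] by blast

end
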